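(* Let $U$ be a finite nonempty set, $R$ an equivalence relation on $U$, and $M(R)$ the support matroid induced by $R$. For every $X\subseteq U$, $X$ is a closed set of $M(R)$ if and only if $R^{*}(X)=X$.
   Context: For $x\in U$, $RN(x)=\{y\in U\mid xRy\}$; $R^{*}(X)=\{x\in U\mid RN(x)\cap X\neq\emptyset\}$. Let $\mathbf{S}(R)=\{X\subseteq U\mid R^{*}(X)=U\}$. The support matroid $M(R)=(U,\mathbf{I}(R))$ is the matroid on $U$ whose independent sets $\mathbf{I}(R)$ are the subsets of inclusion-minimal members of $\mathbf{S}(R)$. For a matroid $(U,\mathbf{I})$, the rank is $r(X)=\max\{|I|\mid I\subseteq X, I\in\mathbf{I}\}$, the closure is $cl(X)=\{e\in U\mid r(X)=r(X\cup\{e\})\}$, and $X$ is closed if $cl(X)=X$. *)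

theory Defs
  imports Main
begin

definition RN :: "'a set \<Rightarrow> ('a \<times> 'a) set \<Rightarrow> 'a \<Rightarrow> 'a set" where
  "RN U R x = {y \<in> U. (x, y) \<in> R}"

definition upper_approx :: "'a set \<Rightarrow> ('a \<times> 'a) set \<Rightarrow> 'a set \<Rightarrow> 'a set" where
  "upper_approx U R X = {x \<in> U. RN U R x \<inter> X \<noteq> {}}"

definition supports :: "'a set \<Rightarrow> ('a \<times> 'a) set \<Rightarrow> 'a set set" where
  "supports U R = {X. X \<subseteq> U \<and> upper_approx U R X = U}"

definition minimal_supports :: "'a set \<Rightarrow> ('a \<times> 'a) set \<Rightarrow> 'a set set" where
  "minimal_supports U R =
     {X \<in> supports U R. \<forall>Y \<in> supports U R. Y \<subseteq> X \<longrightarrow> Y = X}"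

definition supp_indep :: "'a set \<Rightarrow> ('a \<times> 'a) set \<Rightarrow> 'a set set" where
  "supp_indep U R = {I. \<exists>B \<in> minimal_supports U R. I \<subseteq> B}"

definition supp_rank :: "'a set \<Rightarrow> ('a \<times> 'a) set \<Rightarrow> 'a set \<Rightarrow> nat" where
  "supp_rank U R X = Max {card I | I. I \<subseteq> X \<and> I \<in> supp_indep U R}"

definition supp_cl :: "'a set \<Rightarrow> ('a \<times> 'a) set \<Rightarrow> 'a set \<Rightarrow> 'a set" where
  "supp_cl U R X = {e \<in> U. supp_rank U R X = supp_rank U R (insert e X)}"

definition supp_closed :: "'a set \<Rightarrow> ('a \<times> 'a) set \<Rightarrow> 'a set \<Rightarrow> bool" where
  "supp_closed U R X \<longleftrightarrow> supp_cl U R X = X"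

end

theory Submission
  imports Defs
begin

lemma RN_eq: "equiv U R \<Longrightarrow> x \<in> U \<Longrightarrow> RN U R x = R``{x}"
  unfolding RN_def equiv_def refl_on_def by auto

lemma cls_eq_iff: "equiv U R \<Longrightarrow> x \<in> U \<Longrightarrow> y \<in> U \<Longrightarrow> (R``{x} = R``{y}) = ((x,y) \<in> R)"
  by (meson eq_equiv_class_iff)

lemma indep_inj:
  assumes eq: "equiv U R" and B: "B \<in> minimal_supports U R"
  shows "B \<subseteq> U \<and> inj_on (\<lambda>x. R``{x}) B"
proof -
  have BU: "B \<subseteq> U" and sup: "upper_approx U R B = U"
    and mn: "\<And>Y. Y \<in> supports U R \<Longrightarrow> Y \<subseteq> B \<Longrightarrow> Y = B"
    using B unfolding minimal_supports_def supports_def by auto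
  have "inj_on (\<lambda>x. R``{x}) B"
  proof (rule inj_onI, rule ccontr)
    fix a b assume a: "a \<in> B" and b: "b \<in> B" and e: "R``{a} = R``{b}" and ne: "a \<noteq> b"
    have ab: "(a,b) \<in> R" using e a b BU cls_eq_iff[OF eq] by blast
    have "B - {b} \<in> supports U R"
    proof -
      have "x \<in> upper_approx U R (B - {b})" if "x \<in> U" for x
      proof -
        from sup that obtain y where y: "y \<in> B" "(x,y) \<in> R" "y \<in> U"
          unfolding upper_approx_def RN_def by auto
        show ?thesis
        proof (cases "y = b")
          case True
          then have "(x,a) \<in> R" using y ab eq
            by (meson equiv_def sym_def trans_def)
          then show ?thesis using that a ne BU unfolding upper_approx_def RN_def by auto
        next
          case False then show ?thesis using that y unfolding upper_approx_def RN_def by auto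
        qed
      qed
      then show ?thesis unfolding supports_def using BU by (auto simp: upper_approx_def)
    qed
    then have "B - {b} = B" using mn by auto
    then show False using b by auto
  qed
  then show ?thesis using BU by auto
qed

lemma inj_indep:
  assumes eq: "equiv U R" and IU: "I \<subseteq> U" and inj: "inj_on (\<lambda>x. R``{x}) I"
  shows "I \<in> supp_indep U R"
proof -
  let ?c = "\<lambda>x. R``{x}"
  let ?S = "{C \<in> U//R. C \<inter> I = {}}"
  have "\<forall>C\<in>U//R. \<exists>x. x \<in> C"
  proof
    fix C assume "C \<in> U//R"
    then obtain x where "x \<in> U" "C = R``{x}" by (rule quotientE)
    then show "\<exists>x. x \<in> C" using equiv_class_self[OF eq] by blast
  qed
  then obtain f where f: "\<And>C. C \<in> U//R \<Longrightarrow> f C \<in> C" by metis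
  have fc: "?c (f C) = C" and fU: "f C \<in> U" if C: "C \<in> U//R" for C
  proof -
    obtain x where x: "x \<in> U" "C = R``{x}" using C by (rule quotientE)
    have "f C \<in> R``{x}" using f[OF C] x(2) by simp
    then have "(x, f C) \<in> R" by simp
    then show "?c (f C) = C" using x(2) equiv_class_eq[OF eq] by metis
    show "f C \<in> U" using in_quotient_imp_subset[OF eq C] f[OF C] by blast
  qed
  define B where "B = I \<union> f ` ?S"
  have BU: "B \<subseteq> U" using IU fU unfolding B_def by blast
  have cI: "?c x \<in> U//R" if "x \<in> U" for x using that by (rule quotientI)
  have mem: "x \<in> ?c x" if "x \<in> U" for x using equiv_class_self[OF eq that] .
  have injB: "inj_on ?c B"
  proof (rule inj_onI)
    fix a b assume a: "a \<in> B" and b: "b \<in> B" and e: "?c a = ?c b"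
    show "a = b"
    proof (cases "a \<in> I")
      case aI: True
      show ?thesis
      proof (cases "b \<in> I")
        case True then show ?thesis using aI e inj by (meson inj_onD)
      next
        case False
        then obtain C where C: "C \<in> ?S" "b = f C" using b unfolding B_def by blast
        then have "?c b = C" using fc by blast
        then have "a \<in> C" using e mem[of a] aI IU by blast
        then show ?thesis using C aI by blast
      qed
    next
      case aN: False
      then obtain C where C: "C \<in> ?S" "a = f C" using a unfolding B_def by blast
      then have ca: "?c a = C" using fc by blast
      show ?thesis
      proof (cases "b \<in> I")
        case True
        then have "b \<in> C" using e ca mem[of b] IU by blast
        then show ?thesis using C True by blast
      next
        case False
        then obtain D where D: "D \<in> ?S" "b = f D" using b unfolding B_def by blast
        then have "?c b = D" using fc by blast
        then show ?thesis using ca e C D by simp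
      qed
    qed
  qed
  have meet: "RN U R x \<inter> B \<noteq> {}" if x: "x \<in> U" for x
  proof (cases "?c x \<inter> I = {}")
    case True
    then have "?c x \<in> ?S" using cI[OF x] by blast
    then have "f (?c x) \<in> B" unfolding B_def by blast
    moreover have "f (?c x) \<in> ?c x" by (rule f[OF cI[OF x]])
    ultimately show ?thesis using RN_eq[OF eq x] by blast
  next
    case False then show ?thesis using RN_eq[OF eq x] unfolding B_def by blast
  qed
  have supB: "B \<in> supports U R"
    unfolding supports_def upper_approx_def using BU meet by blast
  have mn: "Y = B" if Y: "Y \<in> supports U R" "Y \<subseteq> B" for Y
  proof (rule equalityI[OF Y(2)], rule subsetI)
    fix b assume bB: "b \<in> B"
    have "b \<in> upper_approx U R Y" using Y bB BU unfolding supports_def by auto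
    then obtain y where y: "y \<in> Y" "(b,y) \<in> R" "y \<in> U" unfolding upper_approx_def RN_def by auto
    then have e: "?c b = ?c y" using cls_eq_iff[OF eq] bB BU by auto
    have "y \<in> B" using y Y by auto
    then have "b = y" using inj_onD[OF injB e bB] by simp
    then show "b \<in> Y" using y by simp
  qed
  have "B \<in> minimal_supports U R"
    unfolding minimal_supports_def using supB mn by blast
  moreover have "I \<subseteq> B" unfolding B_def by (rule Un_upper1)
  ultimately show ?thesis unfolding supp_indep_def by blast
qed

lemma indep_iff:
  assumes eq: "equiv U R"
  shows "I \<in> supp_indep U R \<longleftrightarrow> I \<subseteq> U \<and> inj_on (\<lambda>x. R``{x}) I"
proof (rule iffI)
  assume "I \<in> supp_indep U R"
  then obtain B where B1: "B \<in> minimal_supports U R" and B2: "I \<subseteq> B"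
    unfolding supp_indep_def by blast
  have h: "B \<subseteq> U \<and> inj_on (\<lambda>x. R``{x}) B" by (rule indep_inj[OF eq B1])
  have "I \<subseteq> U" using B2 conjunct1[OF h] by (rule subset_trans)
  moreover have "inj_on (\<lambda>x. R``{x}) I" using inj_on_subset[OF conjunct2[OF h] B2] .
  ultimately show "I \<subseteq> U \<and> inj_on (\<lambda>x. R``{x}) I" by (rule conjI)
next
  assume a: "I \<subseteq> U \<and> inj_on (\<lambda>x. R``{x}) I"
  show "I \<in> supp_indep U R" using inj_indep[OF eq conjunct1[OF a] conjunct2[OF a]] .
qed

lemma rank_eq:
  assumes fin: "finite U" and eq: "equiv U R" and XU: "X \<subseteq> U"
  shows "supp_rank U R X = card ((\<lambda>x. R``{x}) ` X)"
proof -
  let ?c = "\<lambda>x. R``{x}"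
  let ?A = "{card I | I. I \<subseteq> X \<and> I \<in> supp_indep U R}"
  have finX: "finite X" using fin XU finite_subset by auto
  have ub: "n \<le> card (?c ` X)" if "n \<in> ?A" for n
  proof -
    obtain I where I: "n = card I" "I \<subseteq> X" "I \<in> supp_indep U R" using \<open>n \<in> ?A\<close> by auto
    then have "inj_on ?c I" using indep_iff[OF eq, of I] by simp
    then have "card I = card (?c ` I)" by (simp add: card_image)
    also have "\<dots> \<le> card (?c ` X)" using I finX by (intro card_mono) auto
    finally show ?thesis using I by simp
  qed
  define J where "J = inv_into X ?c ` (?c ` X)"
  have J: "J \<subseteq> X" "bij_betw ?c J (?c ` X)"
    unfolding J_def
  proof -
    show "inv_into X ?c ` (?c ` X) \<subseteq> X" by (auto intro: inv_into_into)
    have inj: "inj_on (inv_into X ?c) (?c ` X)" by (rule inj_on_inv_into) simp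
    have "bij_betw (inv_into X ?c) (?c ` X) (inv_into X ?c ` (?c ` X))"
      using inj by (simp add: bij_betw_def)
    then have bb: "bij_betw (inv_into (?c ` X) (inv_into X ?c)) (inv_into X ?c ` (?c ` X)) (?c ` X)"
      by (rule bij_betw_inv_into)
    have ee: "inv_into (?c ` X) (inv_into X ?c) y = ?c y" if yin: "y \<in> inv_into X ?c ` (?c ` X)" for y
    proof -
      obtain z where z: "z \<in> ?c ` X" "y = inv_into X ?c z" using yin by blast
      have A: "inv_into (?c ` X) (inv_into X ?c) y = z" unfolding z(2) by (rule inv_into_f_f[OF inj z(1)])
      have B: "?c y = z" unfolding z(2) by (rule f_inv_into_f[OF z(1)])
      show ?thesis by (rule trans[OF A sym[OF B]])
    qed
    show "bij_betw ?c (inv_into X ?c ` (?c ` X)) (?c ` X)"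
      using bb bij_betw_cong[of "inv_into X ?c ` (?c ` X)" "inv_into (?c ` X) (inv_into X ?c)" ?c "?c ` X"] ee
      by simp
  qed
  then have "card J = card (?c ` X)" by (simp add: bij_betw_same_card)
  moreover have "J \<in> supp_indep U R"
  proof -
    have "J \<subseteq> U" using J(1) XU by (rule subset_trans)
    moreover have "inj_on ?c J" using J(2) by (rule bij_betw_imp_inj_on)
    ultimately show ?thesis using indep_iff[OF eq, of J] by simp
  qed
  ultimately have inA: "card (?c ` X) \<in> ?A" using J(1) by (metis (mono_tags, lifting) mem_Collect_eq)
  have finA: "finite ?A"
  proof (rule finite_subset[of _ "{..card (?c ` X)}"])
    show "?A \<subseteq> {..card (?c ` X)}" using ub by blast
  qed simp
  have "Max ?A \<le> card (?c ` X)" using ub[OF Max_in[OF finA]] inA by blast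
  moreover have "card (?c ` X) \<le> Max ?A" using finA inA by (rule Max_ge)
  ultimately show ?thesis unfolding supp_rank_def by (rule antisym)
qed

theorem corollary1:
  fixes U :: "'a set" and R :: "('a \<times> 'a) set" and X :: "'a set"
  assumes "finite U" and "U \<noteq> {}" and "equiv U R" and "X \<subseteq> U"
  shows "supp_closed U R X \<longleftrightarrow> upper_approx U R X = X"
proof -
  let ?c = "\<lambda>x. R``{x}"
  have finX: "finite X" using assms finite_subset by auto
  have "supp_cl U R X = upper_approx U R X"
  proof (rule set_eqI)
    fix e
    show "e \<in> supp_cl U R X \<longleftrightarrow> e \<in> upper_approx U R X"
    proof (cases "e \<in> U")
      case False then show ?thesis unfolding supp_cl_def upper_approx_def by auto
    next
      case eU: True
      have r1: "supp_rank U R X = card (?c ` X)" by (rule rank_eq[OF assms(1) assms(3) assms(4)])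
      have ieU: "insert e X \<subseteq> U" using eU assms(4) by simp
      have r2: "supp_rank U R (insert e X) = card (?c ` insert e X)"
        by (rule rank_eq[OF assms(1) assms(3) ieU])
      have fi: "finite (?c ` X)" using finX by simp
      have "(card (?c ` X) = card (?c ` insert e X)) \<longleftrightarrow> ?c e \<in> ?c ` X"
      proof (cases "?c e \<in> ?c ` X")
        case True then show ?thesis by (simp add: insert_absorb)
      next
        case False then show ?thesis using fi by simp
      qed
      also have "\<dots> \<longleftrightarrow> (\<exists>x\<in>X. (e,x) \<in> R)"
      proof
        assume "?c e \<in> ?c ` X"
        then obtain x where "x \<in> X" "?c e = ?c x" by auto
        then show "\<exists>x\<in>X. (e,x) \<in> R" using cls_eq_iff[OF assms(3) eU, of x] assms(4) by auto
      next
        assume "\<exists>x\<in>X. (e,x) \<in> R"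
        then obtain x where "x \<in> X" "(e,x) \<in> R" by auto
        then show "?c e \<in> ?c ` X" using cls_eq_iff[OF assms(3) eU, of x] assms(4) by auto
      qed
      also have "\<dots> \<longleftrightarrow> RN U R e \<inter> X \<noteq> {}"
        using assms(4) unfolding RN_def by auto
      finally show ?thesis unfolding supp_cl_def upper_approx_def using r1 r2 eU by auto
    qed
  qed
  then show ?thesis unfolding supp_closed_def by simp
qed

end
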